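(* Let $G=(V,E)$ be a connected undirected graph on $n$ nodes with Laplacian $L$, let $\kappa_1,\dots,\kappa_n>0$, $D_\kappa=\mathrm{diag}(\kappa_1,\dots,\kappa_n)$, and for $S\subseteq V$ let $Q_S=L+D_\kappa D_S$, where $D_S$ is the diagonal $0/1$ matrix with $(D_S)_{ii}=1$ iff $i\in S$ (write $Q_v$ for $Q_{\{v\}}$). For nonempty $S$ let $H(S)=\frac12\mathrm{tr}(Q_S^{-1})$. Let $k\ge1$ be an integer, let $\hat H=\min\{H(S): S\subseteq V,\ S\neq\emptyset,\ |S|\le k\}$, and let $B=\max_{v\in V}\mathrm{tr}(Q_v^{-1})$. Let $S_s$ be the output of the following Swap Algorithm: start from an arbitrary set $S\subseteq V$ with $|S|=k$; while there exist $i\in S$ and $j\in V\setminus S$ with $\mathrm{tr}(Q_{(S\cup\{j\})\setminus\{i\}}^{-1})<\mathrm{tr}(Q_S^{-1})$, replace $S$ by $(S\cup\{j\})\setminus\{i\}$; when no such pair exists, return $S$. Then $$H(S_s)\le\left(1-\frac{k-1}{2k-1}\right)\hat H+B\,\frac{k-1}{2k-1}.$$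
   Context: For nonempty $S$, $Q_S$ is positive definite. $H(S)$ is the total steady-state variance of the leader–follower consensus dynamics $\dot x=-(L+D_\kappa D_S)x+w$ with white noise $w$, where $S$ is the set of leaders; the $k$-leader selection problem asks to minimize $H(S)$ subject to $|S|\le k$. *)

theory Defs
  imports "HOL-Analysis.Analysis"
begin

text \<open>Nodes are the elements of a finite type 'n (so n = CARD('n)).
  The undirected simple graph is given by a symmetric irreflexive adjacency relation E.\<close>

definition undirected_graph :: "('n \<Rightarrow> 'n \<Rightarrow> bool) \<Rightarrow> bool" where
  "undirected_graph E \<longleftrightarrow> (\<forall>i j. E i j \<longrightarrow> E j i) \<and> (\<forall>i. \<not> E i i)"

definition connected_graph :: "('n \<Rightarrow> 'n \<Rightarrow> bool) \<Rightarrow> bool" where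
  "connected_graph E \<longleftrightarrow> (\<forall>i j. E\<^sup>*\<^sup>* i j)"

definition laplacian :: "('n::finite \<Rightarrow> 'n \<Rightarrow> bool) \<Rightarrow> real^'n^'n" where
  "laplacian E = (\<chi> i j. (if i = j then real (card {l. E i l}) else 0) - (if E i j then 1 else 0))"

definition diag_sel :: "'n set \<Rightarrow> real^'n^'n" where
  "diag_sel S = (\<chi> i j. if i = j \<and> i \<in> S then 1 else 0)"

definition diag_kappa :: "('n \<Rightarrow> real) \<Rightarrow> real^'n^'n" where
  "diag_kappa \<kappa> = (\<chi> i j. if i = j then \<kappa> i else 0)"

definition QS :: "('n::finite \<Rightarrow> 'n \<Rightarrow> bool) \<Rightarrow> ('n \<Rightarrow> real) \<Rightarrow> 'n set \<Rightarrow> real^'n^'n" where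
  "QS E \<kappa> S = laplacian E + diag_kappa \<kappa> ** diag_sel S"

definition Hval :: "('n::finite \<Rightarrow> 'n \<Rightarrow> bool) \<Rightarrow> ('n \<Rightarrow> real) \<Rightarrow> 'n set \<Rightarrow> real" where
  "Hval E \<kappa> S = trace (matrix_inv (QS E \<kappa> S)) / 2"

definition swap_step :: "('n::finite \<Rightarrow> 'n \<Rightarrow> bool) \<Rightarrow> ('n \<Rightarrow> real) \<Rightarrow> 'n set \<Rightarrow> 'n set \<Rightarrow> bool" where
  "swap_step E \<kappa> S S' \<longleftrightarrow> (\<exists>i\<in>S. \<exists>j. j \<notin> S \<and> S' = (S \<union> {j}) - {i} \<and>
      trace (matrix_inv (QS E \<kappa> S')) < trace (matrix_inv (QS E \<kappa> S)))"

definition swap_output :: "('n::finite \<Rightarrow> 'n \<Rightarrow> bool) \<Rightarrow> ('n \<Rightarrow> real) \<Rightarrow> nat \<Rightarrow> 'n set \<Rightarrow> bool" where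
  "swap_output E \<kappa> k S \<longleftrightarrow> (\<exists>S0. card S0 = k \<and> (swap_step E \<kappa>)\<^sup>*\<^sup>* S0 S) \<and>
      \<not> (\<exists>S'. swap_step E \<kappa> S S')"

end

theory Submission
  imports Defs
begin

lemma QS_entry: "(QS E \<kappa> S)$i$j = (if i=j then real(card{l. E i l}) else 0) - (if E i j then 1 else 0) + (if i = j \<and> i \<in> S then \<kappa> i else 0)"
proof -
  have "(diag_kappa \<kappa> ** diag_sel S)$i$j = (\<Sum>k\<in>UNIV. (diag_kappa \<kappa>)$i$k * (diag_sel S)$k$j)"
    by (simp add: matrix_matrix_mult_def)
  also have "\<dots> = (\<Sum>k\<in>UNIV. (if i = k then \<kappa> i * (if k = j \<and> k \<in> S then 1 else 0) else 0))"
    by (rule sum.cong) (auto simp: diag_kappa_def diag_sel_def)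
  also have "\<dots> = (if i = j \<and> i \<in> S then \<kappa> i else 0)"
    by (auto simp: sum.delta')
  finally show ?thesis unfolding QS_def laplacian_def by simp
qed

lemma QS_mv: "(QS E \<kappa> S *v y)$i = (\<Sum>j\<in>{l. E i l}. y$i - y$j) + (if i \<in> S then \<kappa> i * y$i else 0)"
proof -
  have "(QS E \<kappa> S *v y)$i = (\<Sum>j\<in>UNIV. (QS E \<kappa> S)$i$j * y$j)"
    by (simp add: matrix_vector_mult_def)
  also have "\<dots> = (\<Sum>j\<in>UNIV. (if i=j then real(card{l. E i l}) * y$j else 0) - (if E i j then y$j else 0) + (if i = j then (if i \<in> S then \<kappa> i * y$j else 0) else 0))"
    by (rule sum.cong, simp, simp add: QS_entry algebra_simps)
  also have "\<dots> = (\<Sum>j\<in>UNIV. (if i=j then real(card{l. E i l}) * y$j else 0)) - (\<Sum>j\<in>UNIV. (if E i j then y$j else 0)) + (\<Sum>j\<in>UNIV. (if i = j then (if i \<in> S then \<kappa> i * y$j else 0) else 0))"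
    by (simp add: sum.distrib sum_subtractf)
  also have "\<dots> = real(card{l. E i l}) * y$i - (\<Sum>j\<in>{l. E i l}. y$j) + (if i \<in> S then \<kappa> i * y$i else 0)"
    by (simp add: sum.If_cases)
  also have "\<dots> = (\<Sum>j\<in>{l. E i l}. y$i - y$j) + (if i \<in> S then \<kappa> i * y$i else 0)"
    by (simp add: sum_subtractf)
  finally show ?thesis .
qed


locale LS =
  fixes E :: "'n::finite \<Rightarrow> 'n \<Rightarrow> bool" and \<kappa> :: "'n \<Rightarrow> real"
  assumes und: "undirected_graph E" and con: "connected_graph E" and kpos: "\<And>i. \<kappa> i > 0"
begin

lemma minprin:
  assumes h: "\<And>i. 0 \<le> (QS E \<kappa> S *v y)$i \<or> 0 \<le> y$i"
    and ex: "(\<exists>i. 0 \<le> y$i) \<or> S \<noteq> {}"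
  shows "0 \<le> y$i"
proof (rule ccontr)
  assume neg: "\<not> 0 \<le> y$i"
  define m where "m = Min (range (\<lambda>j. y$j))"
  have mle: "\<And>j. m \<le> y$j" unfolding m_def by (rule Min_le) auto
  have "m \<in> range (\<lambda>j. y$j)" unfolding m_def by (rule Min_in) auto
  then obtain i0 where i0: "y$i0 = m" by auto
  have m0: "m < 0" using mle[of i] neg by simp
  have stepl: "a \<notin> S \<and> (\<forall>b. E a b \<longrightarrow> y$b = m)" if ya: "y$a = m" for a
  proof -
    from h[of a] ya m0 have q: "0 \<le> (\<Sum>j\<in>{l. E a l}. y$a - y$j) + (if a\<in>S then \<kappa> a * y$a else 0)"
      by (auto simp: QS_mv)
    have t1: "(\<Sum>j\<in>{l. E a l}. y$a - y$j) \<le> 0"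
      by (rule sum_nonpos) (use mle ya in auto)
    have t2: "(if a\<in>S then \<kappa> a * y$a else 0) \<le> 0"
      using kpos[of a] ya m0 by (simp add: mult_pos_neg less_imp_le)
    have z1: "(\<Sum>j\<in>{l. E a l}. y$j - y$a) = 0"
      using q t1 t2 by (simp add: sum_subtractf)
    have z2: "(if a\<in>S then \<kappa> a * y$a else 0) = 0" using q t1 t2 by linarith
    have "\<forall>j\<in>{l. E a l}. y$j - y$a = 0"
      using z1 by (subst sum_nonneg_eq_0_iff[symmetric]) (use mle ya in auto)
    then have "\<forall>b. E a b \<longrightarrow> y$b = m" using ya by auto
    moreover have "a \<notin> S" using z2 kpos[of a] ya m0 by (auto split: if_splits)
    ultimately show ?thesis by blast
  qed
  have all: "y$j = m" if "E\<^sup>*\<^sup>* i0 j" for j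
    using that
  proof (induction rule: rtranclp_induct)
    case base then show ?case using i0 by simp
  next
    case (step a b) then show ?case using stepl by blast
  qed
  have allm: "\<And>j. y$j = m" using all con unfolding connected_graph_def by blast
  from ex show False
  proof
    assume "\<exists>i. 0 \<le> y$i" then show False using allm m0 by force
  next
    assume "S \<noteq> {}" then obtain s where "s \<in> S" by blast
    then show False using stepl[OF allm[of s]] by blast
  qed
qed

end


context LS begin

lemma QS_inj: assumes "S \<noteq> {}" and "QS E \<kappa> S *v y = 0" shows "y = 0"
proof -
  have a: "0 \<le> y$i" for i by (rule minprin[of S]) (use assms in auto)
  have b: "0 \<le> (-y)$i" for i
    by (rule minprin[of S]) (use assms in \<open>auto simp: matrix_vector_mult_diff_distrib[of _ 0 y, simplified]\<close>)
  show ?thesis using a b by (simp add: vec_eq_iff order_antisym)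
qed

lemma QS_invertible: "S \<noteq> {} \<Longrightarrow> invertible (QS E \<kappa> S)"
  unfolding invertible_left_inverse matrix_left_invertible_ker using QS_inj by blast

lemma QS_inv: assumes "S \<noteq> {}"
  shows "QS E \<kappa> S ** matrix_inv (QS E \<kappa> S) = mat 1" "matrix_inv (QS E \<kappa> S) ** QS E \<kappa> S = mat 1"
proof -
  have "\<exists>A'. QS E \<kappa> S ** A' = mat 1 \<and> A' ** QS E \<kappa> S = mat 1"
    using QS_invertible[OF assms] unfolding invertible_def .
  from someI_ex[OF this] show "QS E \<kappa> S ** matrix_inv (QS E \<kappa> S) = mat 1" "matrix_inv (QS E \<kappa> S) ** QS E \<kappa> S = mat 1"
    unfolding matrix_inv_def by auto
qed

definition sol :: "'n set \<Rightarrow> real^'n \<Rightarrow> real^'n" where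
  "sol S b = matrix_inv (QS E \<kappa> S) *v b"

lemma sol_eq: "S \<noteq> {} \<Longrightarrow> QS E \<kappa> S *v sol S b = b"
  unfolding sol_def by (simp add: matrix_vector_mul_assoc QS_inv)

lemma sol_unique: "S \<noteq> {} \<Longrightarrow> QS E \<kappa> S *v y = b \<Longrightarrow> y = sol S b"
  unfolding sol_def by (metis matrix_vector_mul_assoc QS_inv(2) matrix_vector_mul_lid)

lemma sol_nonneg: assumes "S \<noteq> {}" "\<And>j. 0 \<le> b$j" shows "0 \<le> sol S b $ i"
  by (rule minprin[of S]) (use assms sol_eq in auto)

lemma QS_mono_mv: assumes "S \<subseteq> T"
  shows "(QS E \<kappa> T *v y)$i = (QS E \<kappa> S *v y)$i + (if i \<in> T \<and> i \<notin> S then \<kappa> i * y$i else 0)"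
  using assms by (auto simp: QS_mv)

lemma sol_mono: assumes "S \<noteq> {}" "S \<subseteq> T" "\<And>j. 0 \<le> b$j"
  shows "sol T b $ i \<le> sol S b $ i"
proof -
  have T: "T \<noteq> {}" using assms by auto
  have "0 \<le> (sol S b - sol T b)$i"
  proof (rule minprin[of T])
    fix j
    have "(QS E \<kappa> T *v (sol S b - sol T b))$j = (QS E \<kappa> T *v sol S b)$j - b$j"
      by (simp add: matrix_vector_mult_diff_distrib sol_eq[OF T])
    also have "\<dots> = (if j \<in> T \<and> j \<notin> S then \<kappa> j * sol S b $ j else 0)"
      using QS_mono_mv[OF assms(2)] sol_eq[OF assms(1)] by simp
    also have "\<dots> \<ge> 0" using kpos[of j] sol_nonneg[OF assms(1,3)] by simp
    finally show "0 \<le> (QS E \<kappa> T *v (sol S b - sol T b))$j \<or> 0 \<le> (sol S b - sol T b)$j" by simp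
  next
    show "(\<exists>i. 0 \<le> (sol S b - sol T b) $ i) \<or> T \<noteq> {}" using T by simp
  qed
  then show ?thesis by simp
qed

definition f :: "'n set \<Rightarrow> real" where "f S = trace (matrix_inv (QS E \<kappa> S))"

lemma mv_axis: "(A *v axis i (1::real)) $ j = A$j$i"
  by (simp add: matrix_vector_mult_basis column_def)

lemma f_sol: "f S = (\<Sum>i\<in>UNIV. sol S (axis i 1) $ i)"
  unfolding f_def trace_def sol_def by (simp add: mv_axis)

lemma axis_nonneg: "0 \<le> (axis i (1::real))$j"
  by (simp add: axis_def)

lemma f_nonneg: "S \<noteq> {} \<Longrightarrow> 0 \<le> f S"
  unfolding f_sol by (rule sum_nonneg) (simp add: sol_nonneg axis_nonneg)

lemma f_mono: "S \<noteq> {} \<Longrightarrow> S \<subseteq> T \<Longrightarrow> f T \<le> f S"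
  unfolding f_sol by (rule sum_mono) (simp add: sol_mono axis_nonneg)

lemma QS_sym: "transpose (QS E \<kappa> S) = QS E \<kappa> S"
  using und unfolding undirected_graph_def
  by (auto simp: vec_eq_iff transpose_def QS_entry)

lemma sol_sym: assumes "S \<noteq> {}" shows "sol S (axis i 1) $ x = sol S (axis x 1) $ i"
proof -
  let ?Q = "QS E \<kappa> S" let ?u = "sol S (axis i 1)" let ?v = "sol S (axis x 1)"
  have "?u $ x = inner ?u (axis x 1)" by (rule cart_eq_inner_axis)
  also have "\<dots> = inner ?u (?Q *v ?v)" by (simp add: sol_eq[OF assms])
  also have "\<dots> = inner (?u v* ?Q) ?v" by (simp add: dot_lmul_matrix)
  also have "?u v* ?Q = ?Q *v ?u" by (metis transpose_matrix_vector QS_sym)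
  also have "\<dots> = axis i 1" by (simp add: sol_eq[OF assms])
  also have "inner (axis i 1) ?v = ?v $ i" by (simp add: cart_eq_inner_axis inner_commute)
  finally show ?thesis .
qed

end


context LS begin

lemma sol_pos_x: assumes "S \<noteq> {}" "x \<notin> S" shows "0 < sol S (axis x 1) $ x"
proof -
  let ?b = "sol S (axis x 1)"
  have nn: "\<And>j. 0 \<le> ?b $ j" using sol_nonneg[OF assms(1)] axis_nonneg by blast
  have "1 = (QS E \<kappa> S *v ?b) $ x" using sol_eq[OF assms(1)] by simp
  also have "\<dots> = (\<Sum>j\<in>{l. E x l}. ?b$x - ?b$j)" using assms(2) by (simp add: QS_mv)
  finally have e: "1 = (\<Sum>j\<in>{l. E x l}. ?b$x - ?b$j)" .
  show ?thesis
  proof (rule ccontr)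
    assume "\<not> 0 < ?b $ x"
    then have "?b $ x = 0" using nn[of x] by simp
    then have "(\<Sum>j\<in>{l. E x l}. ?b$x - ?b$j) \<le> 0" using nn by (auto intro: sum_nonpos)
    then show False using e by simp
  qed
qed

lemma sherman: assumes A: "A \<noteq> {}" and x: "x \<notin> A"
  shows "sol (insert x A) b = sol A b - (\<kappa> x * sol A b $ x / (1 + \<kappa> x * sol A (axis x 1) $ x)) *s sol A (axis x 1)"
proof -
  let ?a = "sol A (axis x 1)" let ?y = "sol A b"
  define c where "c = \<kappa> x * ?y $ x / (1 + \<kappa> x * ?a $ x)"
  have den: "1 + \<kappa> x * ?a $ x > 0" using sol_pos_x[OF A x] kpos[of x] by (simp add: add_pos_pos)
  have cx: "c * (1 + \<kappa> x * ?a $ x) = \<kappa> x * ?y $ x" unfolding c_def using den by simp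
  have "QS E \<kappa> (insert x A) *v (?y - c *s ?a) = b"
  proof (subst vec_eq_iff, intro allI)
    fix i
    have "(QS E \<kappa> (insert x A) *v (?y - c *s ?a)) $ i = (QS E \<kappa> A *v (?y - c *s ?a)) $ i + (if i = x then \<kappa> x * (?y - c *s ?a) $ x else 0)"
      using QS_mono_mv[of A "insert x A" "?y - c *s ?a" i] x by (cases "i = x") auto
    also have "(QS E \<kappa> A *v (?y - c *s ?a)) = b - c *s axis x 1"
      by (simp add: matrix_vector_mult_diff_distrib scalar_mult_eq_scaleR matrix_vector_mult_scaleR sol_eq[OF A])
    finally have "(QS E \<kappa> (insert x A) *v (?y - c *s ?a)) $ i = (b - c *s axis x 1) $ i + (if i = x then \<kappa> x * (?y - c *s ?a) $ x else 0)" .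
    moreover have "(b - c *s axis x 1) $ i + (if i = x then \<kappa> x * (?y - c *s ?a) $ x else 0) = b $ i"
    proof (cases "i = x")
      case True
      have "\<kappa> x * (?y $ x - c * ?a $ x) = c" using cx by (simp add: algebra_simps)
      then show ?thesis using True by simp
    next
      case False then show ?thesis by (simp add: axis_def)
    qed
    ultimately show "(QS E \<kappa> (insert x A) *v (?y - c *s ?a)) $ i = b $ i" by simp
  qed
  from sol_unique[of "insert x A", OF _ this] show ?thesis unfolding c_def by simp
qed

definition gain :: "'n set \<Rightarrow> 'n \<Rightarrow> real" where
  "gain A x = \<kappa> x * (\<Sum>i\<in>UNIV. (sol A (axis x 1) $ i)^2) / (1 + \<kappa> x * sol A (axis x 1) $ x)"

lemma gain_eq: assumes A: "A \<noteq> {}" and x: "x \<notin> A"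
  shows "f A - f (insert x A) = gain A x"
proof -
  let ?a = "sol A (axis x 1)"
  let ?d = "1 + \<kappa> x * ?a $ x"
  have "f A - f (insert x A) = (\<Sum>i\<in>UNIV. sol A (axis i 1) $ i - sol (insert x A) (axis i 1) $ i)"
    unfolding f_sol by (simp add: sum_subtractf)
  also have "\<dots> = (\<Sum>i\<in>UNIV. \<kappa> x * (?a $ i)^2 / ?d)"
  proof (rule sum.cong[OF refl])
    fix i
    show "sol A (axis i 1) $ i - sol (insert x A) (axis i 1) $ i = \<kappa> x * (?a $ i)^2 / ?d"
      using sherman[OF A x, of "axis i 1"] sol_sym[OF A, of i x] by (simp add: power2_eq_square)
  qed
  also have "\<dots> = gain A x" unfolding gain_def by (simp add: sum_divide_distrib sum_distrib_left)
  finally show ?thesis .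
qed

end


context LS begin

lemma ratio_mono: assumes A: "A \<noteq> {}" and AB: "A \<subseteq> B" and x: "x \<notin> B"
  shows "sol B (axis x 1) $ i / sol B (axis x 1) $ x \<le> sol A (axis x 1) $ i / sol A (axis x 1) $ x"
proof -
  let ?a = "sol A (axis x 1)" let ?b = "sol B (axis x 1)"
  have B: "B \<noteq> {}" using A AB by auto
  have xA: "x \<notin> A" using x AB by auto
  have ax: "0 < ?a $ x" using sol_pos_x[OF A xA] .
  have bx: "0 < ?b $ x" using sol_pos_x[OF B x] .
  let ?z = "(1 / ?a $ x) *s ?a - (1 / ?b $ x) *s ?b"
  have "0 \<le> ?z $ i"
  proof (rule minprin[of B])
    fix j
    show "0 \<le> (QS E \<kappa> B *v ?z) $ j \<or> 0 \<le> ?z $ j"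
    proof (cases "j = x")
      case True then show ?thesis using ax bx by simp
    next
      case False
      have "(QS E \<kappa> B *v ?z) $ j = (1 / ?a $ x) * (QS E \<kappa> B *v ?a) $ j - (1 / ?b $ x) * (QS E \<kappa> B *v ?b) $ j"
        by (simp add: matrix_vector_mult_diff_distrib scalar_mult_eq_scaleR matrix_vector_mult_scaleR)
      also have "(QS E \<kappa> B *v ?b) $ j = 0" using sol_eq[OF B] False by (simp add: axis_def)
      also have "(QS E \<kappa> B *v ?a) $ j = (if j \<in> B \<and> j \<notin> A then \<kappa> j * ?a $ j else 0)"
        using QS_mono_mv[OF AB, of ?a j] sol_eq[OF A] False by (simp add: axis_def)
      finally have "(QS E \<kappa> B *v ?z) $ j = (1 / ?a $ x) * (if j \<in> B \<and> j \<notin> A then \<kappa> j * ?a $ j else 0)" by simp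
      moreover have "0 \<le> ?a $ j" using sol_nonneg[OF A] axis_nonneg by blast
      ultimately show ?thesis using ax kpos[of j] by simp
    qed
  next
    show "(\<exists>i. 0 \<le> ?z $ i) \<or> B \<noteq> {}" using B by simp
  qed
  then show ?thesis by simp
qed

lemma phi_mono: fixes k s t :: real assumes "0 < k" "0 < s" "s \<le> t"
  shows "k * s^2 / (1 + k * s) \<le> k * t^2 / (1 + k * t)"
proof -
  have "k * s^2 * (1 + k * t) \<le> k * t^2 * (1 + k * s)"
  proof -
    have "s^2 \<le> t^2" using assms by (simp add: power_mono)
    moreover have "s^2 * t \<le> t^2 * s" using assms by (simp add: power2_eq_square mult_left_mono mult_right_mono)
    ultimately have "s^2 + k * (s^2 * t) \<le> t^2 + k * (t^2 * s)" using assms by (simp add: add_mono mult_left_mono)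
    then have "k * (s^2 + k * (s^2 * t)) \<le> k * (t^2 + k * (t^2 * s))" using assms by (simp add: mult_left_mono)
    then show ?thesis by (simp add: algebra_simps)
  qed
  then show ?thesis using assms by (simp add: divide_simps add_pos_pos)
qed

lemma gain_DR: assumes A: "A \<noteq> {}" and AB: "A \<subseteq> B" and x: "x \<notin> B"
  shows "gain B x \<le> gain A x"
proof -
  let ?a = "sol A (axis x 1)" let ?b = "sol B (axis x 1)"
  have B: "B \<noteq> {}" using A AB by auto
  have xA: "x \<notin> A" using x AB by auto
  have ax: "0 < ?a $ x" using sol_pos_x[OF A xA] .
  have bx: "0 < ?b $ x" using sol_pos_x[OF B x] .
  have bxa: "?b $ x \<le> ?a $ x" using sol_mono[OF A AB] axis_nonneg by blast
  have gA: "gain A x = (\<kappa> x * (?a $ x)^2 / (1 + \<kappa> x * ?a $ x)) * (\<Sum>i\<in>UNIV. (?a $ i / ?a $ x)^2)"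
    unfolding gain_def using ax by (simp add: power_divide sum_divide_distrib[symmetric])
  have gB: "gain B x = (\<kappa> x * (?b $ x)^2 / (1 + \<kappa> x * ?b $ x)) * (\<Sum>i\<in>UNIV. (?b $ i / ?b $ x)^2)"
    unfolding gain_def using bx by (simp add: power_divide sum_divide_distrib[symmetric])
  have s: "(\<Sum>i\<in>UNIV. (?b $ i / ?b $ x)^2) \<le> (\<Sum>i\<in>UNIV. (?a $ i / ?a $ x)^2)"
  proof (rule sum_mono)
    fix i
    have "0 \<le> ?b $ i" using sol_nonneg[OF B] axis_nonneg by blast
    then have "0 \<le> ?b $ i / ?b $ x" using bx by simp
    then show "(?b $ i / ?b $ x)^2 \<le> (?a $ i / ?a $ x)^2"
      using ratio_mono[OF A AB x, of i] by (simp add: power_mono)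
  qed
  have p: "\<kappa> x * (?b $ x)^2 / (1 + \<kappa> x * ?b $ x) \<le> \<kappa> x * (?a $ x)^2 / (1 + \<kappa> x * ?a $ x)"
    using phi_mono[OF kpos bx bxa] .
  have p0: "0 \<le> \<kappa> x * (?a $ x)^2 / (1 + \<kappa> x * ?a $ x)" using kpos[of x] ax by (simp add: add_pos_pos)
  have s0: "0 \<le> (\<Sum>i\<in>UNIV. (?b $ i / ?b $ x)^2)" by (simp add: sum_nonneg)
  show ?thesis unfolding gA gB using mult_mono[OF p s p0 s0] by simp
qed

lemma f_DR: assumes A: "A \<noteq> {}" and AB: "A \<subseteq> B" and x: "x \<notin> B"
  shows "f B - f (insert x B) \<le> f A - f (insert x A)"
proof -
  have "B \<noteq> {}" "x \<notin> A" using assms by auto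
  then show ?thesis using gain_DR[OF assms] gain_eq[OF A] gain_eq[of B x] assms by auto
qed

end


context LS begin

lemma f_chain: assumes S: "S \<noteq> {}" and T: "finite T" and d: "T \<inter> S = {}"
  shows "f S - f (S \<union> T) \<le> (\<Sum>u\<in>T. f S - f (insert u S))"
  using T d
proof (induction T rule: finite_induct)
  case empty then show ?case by simp
next
  case (insert t T)
  have tS: "t \<notin> S \<union> T" using insert by auto
  have IH: "f S - f (S \<union> T) \<le> (\<Sum>u\<in>T. f S - f (insert u S))" using insert by auto
  have dr: "f (S \<union> T) - f (insert t (S \<union> T)) \<le> f S - f (insert t S)"
    using f_DR[OF S _ tS] by auto
  have "f S - f (S \<union> insert t T) = (f S - f (S \<union> T)) + (f (S \<union> T) - f (insert t (S \<union> T)))" by simp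
  also have "\<dots> \<le> (\<Sum>u\<in>T. f S - f (insert u S)) + (f S - f (insert t S))" using IH dr by linarith
  also have "\<dots> = (\<Sum>u\<in>insert t T. f S - f (insert u S))" using insert by simp
  finally show ?case .
qed

lemma local_bound:
  assumes S2: "2 \<le> card S" and loc: "\<And>s u. s \<in> S \<Longrightarrow> u \<notin> S \<Longrightarrow> f S \<le> f ((S \<union> {u}) - {s})"
    and Op: "Op \<noteq> {}" and Bv: "\<And>v. f {v} \<le> B0"
  shows "(real (card (Op - S)) + 1) * f S \<le> real (card (Op - S)) * B0 + f Op"
proof -
  have finS: "finite S" by simp
  have Sne: "S \<noteq> {}" using S2 by auto
  then obtain s where s: "s \<in> S" by blast
  let ?A = "S - {s}"
  have Ane: "?A \<noteq> {}"
  proof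
    assume "?A = {}"
    then have "S \<subseteq> {s}" by auto
    then have "card S \<le> 1" using card_mono[of "{s}" S] by simp
    then show False using S2 by simp
  qed
  then obtain v where v: "v \<in> ?A" by blast
  have fA: "f ?A \<le> B0" using f_mono[of "{v}" ?A] v Bv[of v] by auto
  let ?T = "Op - S"
  have each: "f S \<le> B0 - f S + f (insert u S)" if u: "u \<in> ?T" for u
  proof -
    have oS: "u \<notin> S" using u by simp
    have "(S \<union> {u}) - {s} = insert u ?A" using oS s by auto
    then have "f S \<le> f (insert u ?A)" using loc[OF s oS] by simp
    moreover have "f S - f (insert u S) \<le> f ?A - f (insert u ?A)"
      using f_DR[OF Ane _ oS] by auto
    ultimately show ?thesis using fA by linarith
  qed
  have sum1: "(\<Sum>u\<in>?T. f S) \<le> (\<Sum>u\<in>?T. B0 - f S + f (insert u S))"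
    by (rule sum_mono) (rule each)
  have ch: "f S - f (S \<union> ?T) \<le> (\<Sum>u\<in>?T. f S - f (insert u S))"
    by (rule f_chain[OF Sne]) auto
  have SO: "f (S \<union> ?T) \<le> f Op" using f_mono[OF Op, of "S \<union> ?T"] by auto
  let ?m = "real (card ?T)"
  have "?m * f S \<le> ?m * (B0 - f S) + (\<Sum>u\<in>?T. f (insert u S))"
    using sum1 by (simp add: sum.distrib)
  moreover have "(\<Sum>u\<in>?T. f (insert u S)) \<le> ?m * f S - f S + f Op"
    using ch SO by (simp add: sum_subtractf)
  ultimately show ?thesis by (simp add: algebra_simps)
qed

end

lemma final_arith: fixes K M fS fO B :: real
  assumes K: "2 \<le> K" and M0: "0 \<le> M" and MK: "M \<le> K" and fO0: "0 \<le> fO" and fS0: "0 \<le> fS"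
    and fSB: "fS \<le> B" and h: "(M + 1) * fS \<le> M * B + fO"
  shows "fS / 2 \<le> (1 - (K - 1) / (2 * K - 1)) * (fO / 2) + B * ((K - 1) / (2 * K - 1))"
proof -
  have h1: "fS \<le> fO + M * (B - fS)" using h by (simp add: algebra_simps)
  have "M * (B - fS) \<le> K * (B - fS)" using MK fSB by (simp add: mult_right_mono)
  then have h2: "(K + 1) * fS \<le> K * B + fO" using h1 by (simp add: algebra_simps)
  have h3: "(2*K - 1) * ((K + 1) * fS) \<le> (2*K - 1) * (K * B + fO)"
    using h2 K by (simp add: mult_left_mono)
  have KK: "2 * K \<le> K * K" using K by (simp add: mult_right_mono)
  have p1: "0 \<le> (K*K - K + 1) * fO" using K fO0 KK by (simp add: mult_nonneg_nonneg)
  have B0: "0 \<le> B" using fS0 fSB by simp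
  have p2: "0 \<le> (K - 2) * B" using K B0 by (simp add: mult_nonneg_nonneg)
  have eq: "(K + 1) * (K * fO + 2 * (K - 1) * B) - (2*K - 1) * (K * B + fO) = (K*K - K + 1) * fO + (K - 2) * B"
    by (simp add: algebra_simps)
  have h4: "(K + 1) * ((2*K - 1) * fS) \<le> (K + 1) * (K * fO + 2 * (K - 1) * B)"
    using h3 eq p1 p2 by (simp add: algebra_simps)
  have h5: "(2*K - 1) * fS \<le> K * fO + 2 * (K - 1) * B"
    using h4 K by (simp add: mult_le_cancel_left_pos)
  have pos: "0 < 2 * K - 1" using K by simp
  have e2: "(1 - (K - 1) / (2 * K - 1)) * (fO / 2) + B * ((K - 1) / (2 * K - 1)) = (K * fO + 2 * (K - 1) * B) / (2 * (2 * K - 1))"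
  proof -
    define D where "D = 2 * K - 1"
    have D: "D \<noteq> 0" "D - (K - 1) = K" using pos unfolding D_def by auto
    have "(1 - (K - 1) / D) * (fO / 2) + B * ((K - 1) / D) = ((D - (K - 1)) * fO + 2 * (K - 1) * B) / (2 * D)"
      using D(1) by (simp add: field_simps)
    then show ?thesis using D(2) unfolding D_def by simp
  qed
  have "fS / 2 \<le> (K * fO + 2 * (K - 1) * B) / (2 * (2 * K - 1))"
    using h5 pos by (subst pos_le_divide_eq) (simp_all add: algebra_simps)
  then show ?thesis using e2 by simp
qed



lemma swap_card: "swap_step E \<kappa> S S' \<Longrightarrow> card S' = card (S::'n::finite set)"
  unfolding swap_step_def
proof (elim bexE exE conjE)
  fix i j assume i: "i \<in> S" and j: "j \<notin> S" and S': "S' = S \<union> {j} - {i}"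
  have "card (insert j S - {i}) = card S" using i j by (simp add: card_insert_disjoint)
  then show "card S' = card S" using S' by simp
qed

theorem theorem4:
  fixes E :: "'n::finite \<Rightarrow> 'n \<Rightarrow> bool" and \<kappa> :: "'n \<Rightarrow> real" and k :: nat and Ss :: "'n set"
  assumes "undirected_graph E" and "connected_graph E"
    and "\<And>i. \<kappa> i > 0"
    and "k \<ge> 1"
    and "swap_output E \<kappa> k Ss"
  shows "Hval E \<kappa> Ss \<le>
     (1 - real (k - 1) / real (2 * k - 1)) * Min {Hval E \<kappa> S | S. S \<noteq> {} \<and> card S \<le> k}
     + Max {trace (matrix_inv (QS E \<kappa> {v})) | v. True} * (real (k - 1) / real (2 * k - 1))"
proof -
  interpret LS E \<kappa> using assms(1-3) by unfold_locales auto
  have Hf: "\<And>S. Hval E \<kappa> S = f S / 2" unfolding Hval_def f_def by simp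
  obtain S0 where S0: "card S0 = k" and reach: "(swap_step E \<kappa>)\<^sup>*\<^sup>* S0 Ss"
    and nostep: "\<not> (\<exists>S'. swap_step E \<kappa> Ss S')"
    using assms(5) unfolding swap_output_def by blast
  have cS: "card Ss = k" using reach S0
    by (induction rule: rtranclp_induct) (auto dest: swap_card)
  have Sne: "Ss \<noteq> {}" using cS assms(4) by auto
  have loc: "f Ss \<le> f ((Ss \<union> {u}) - {s})" if "s \<in> Ss" "u \<notin> Ss" for s u
  proof (rule ccontr)
    assume "\<not> f Ss \<le> f ((Ss \<union> {u}) - {s})"
    then have "swap_step E \<kappa> Ss ((Ss \<union> {u}) - {s})"
      unfolding swap_step_def f_def using that by auto
    then show False using nostep by blast
  qed
  define MS where "MS = {Hval E \<kappa> S | S. S \<noteq> {} \<and> card S \<le> k}"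
  define MB where "MB = {trace (matrix_inv (QS E \<kappa> {v})) | v. True}"
  have finMS: "finite MS" unfolding MS_def by (rule finite_image_set) simp
  have SsMS: "Hval E \<kappa> Ss \<in> MS" unfolding MS_def using Sne cS by auto
  have memMS: "\<And>y. y \<in> MS \<Longrightarrow> \<exists>S. S \<noteq> {} \<and> card S \<le> k \<and> Hval E \<kappa> S = y"
    unfolding MS_def by blast
  have "Min MS \<in> MS" using finMS SsMS by (intro Min_in) auto
  from memMS[OF this] obtain Op where Op: "Op \<noteq> {}" "card Op \<le> k" "Hval E \<kappa> Op = Min MS"
    by blast
  have OpS: "f Op \<le> f Ss" using Min_le[OF finMS SsMS] Op(3) Hf by simp
  have finMB: "finite MB" unfolding MB_def by (rule finite_image_set) simp
  have Bv: "f {v} \<le> Max MB" for v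
    using Max_ge[OF finMB, of "f {v}"] unfolding MB_def f_def by auto
  obtain s where s: "s \<in> Ss" using Sne by blast
  have fSB: "f Ss \<le> Max MB" using f_mono[of "{s}" Ss] s Bv[of s] by auto
  have fO0: "0 \<le> f Op" using f_nonneg[OF Op(1)] .
  have fS0: "0 \<le> f Ss" using f_nonneg[OF Sne] .
  show ?thesis
  proof (cases "k = 1")
    case True
    have "Ss = {s}" using cS True s by (metis card_1_singletonE singletonD)
    have "card Op \<noteq> 0" using Op(1) by simp
    then have "card Op = 1" using Op(2) True by linarith
    then obtain u where u: "Op = {u}" by (rule card_1_singletonE)
    have "f Ss \<le> f Op"
    proof (cases "u = s")
      case True then show ?thesis using u \<open>Ss = {s}\<close> by simp
    next
      case False
      have "(Ss \<union> {u}) - {s} = Op" using u \<open>Ss = {s}\<close> False by auto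
      then show ?thesis using loc[OF s, of u] False \<open>Ss = {s}\<close> by auto
    qed
    moreover have "Min MS = f Op / 2" using Op(3) Hf by simp
    moreover have "Hval E \<kappa> Ss = f Ss / 2" by (rule Hf)
    ultimately have "Hval E \<kappa> Ss \<le> Min MS" by linarith
    then show ?thesis using True unfolding MS_def[symmetric] by simp
  next
    case False
    then have k2: "2 \<le> k" using assms(4) by simp
    have lb: "(real (card (Op - Ss)) + 1) * f Ss \<le> real (card (Op - Ss)) * Max MB + f Op"
      by (rule local_bound) (use k2 cS loc Op(1) Bv in auto)
    have mk: "card (Op - Ss) \<le> k" using card_mono[of Op "Op - Ss"] Op(2) by auto
    have fin: "f Ss / 2 \<le> (1 - (real k - 1) / (2 * real k - 1)) * (f Op / 2) + Max MB * ((real k - 1) / (2 * real k - 1))"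
      by (rule final_arith[where M = "real (card (Op - Ss))"]) (use k2 mk fO0 fS0 fSB lb in auto)
    have e1: "real (k - 1) = real k - 1" "real (2 * k - 1) = 2 * real k - 1" using k2 by auto
    have e2: "Min MS = f Op / 2" using Op(3) Hf by simp
    have e3: "Hval E \<kappa> Ss = f Ss / 2" by (rule Hf)
    have "Hval E \<kappa> Ss \<le> (1 - real (k - 1) / real (2 * k - 1)) * Min MS + Max MB * (real (k - 1) / real (2 * k - 1))"
      unfolding e1 e2 e3 by (rule fin)
    then show ?thesis unfolding MS_def MB_def .
  qed
qed


end
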